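(* (a) Let $n\in\mathbb{N}$, $\eta_1,\dots,\eta_{n+1}\in\mathbb{R}^d$ with $\eta_{n+1}=0$ and $\lvert(\nabla_+\eta)_k\rvert=1$ for $1\le k\le n$, and let $G_{kj}$ be the discrete Green function built from $\alpha_k=\langle(\nabla_+\eta)_{k+1},(\nabla_+\eta)_k\rangle$ as below. Suppose that for some $\upsilon\in(0,\frac{2\sqrt n}{5}]$ we have $\frac{k^{3/2}}{n^{3/2}}\lvert(\nabla_+^2\eta)_k\rvert^2\le\upsilon$ for all $1\le k\le n-1$. Then $\frac{n^2G_{kj}}{jk}\ge e^{-2\upsilon}$ for all $1\le j,k\le n$. (b) If $\eta_{ss}$ is smooth and $G$ solves $G_{ss}(s,x)-\lvert\eta_{ss}(s)\rvert^2G(s,x)=-\delta(s-x)$, $G(0,x)=0$, $G_s(1,x)=0$, then $\inf_{0<s,x\le1}\frac{G(s,x)}{sx}\ge\frac{e^{-\varrho}}{1+\varrho}$, where $\varrho=\int_0^1s\lvert\eta_{ss}(s)\rvert^2\,ds$.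
   Context: $(\nabla_+f)_k=n(f_{k+1}-f_k)$. Discrete Green function: $G_{kj}=\frac1n\sum_{i=1}^{\min\{j,k\}}\frac{p_{ij}p_{ik}}{\beta_i}$, $p_{ij}=\prod_{m=i}^{j-1}\frac{\alpha_m}{\beta_{m+1}}$ (empty product $=1$), $\beta_n=1$, $\beta_i=2-\alpha_i^2/\beta_{i+1}$ for $1\le i\le n-1$; it gives the solution $\sigma_k=\frac1n\sum_jG_{kj}\lvert(\nabla_+\dot\eta)_j\rvert^2$ of the chain tension equations. *)

theory Defs
  imports "HOL-Analysis.Analysis"
begin

definition grad_plus :: "nat \<Rightarrow> (nat \<Rightarrow> 'a::real_vector) \<Rightarrow> nat \<Rightarrow> 'a" where
  "grad_plus n f k = real n *\<^sub>R (f (Suc k) - f k)"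

definition alpha_seq :: "nat \<Rightarrow> (nat \<Rightarrow> 'a::real_inner) \<Rightarrow> nat \<Rightarrow> real" where
  "alpha_seq n \<eta> k = inner (grad_plus n \<eta> (Suc k)) (grad_plus n \<eta> k)"

text \<open>Backward recursion beta_n = 1, beta_i = 2 - alpha_i^2 / beta_(i+1), indexed by m = n - i.\<close>
fun beta_aux :: "(nat \<Rightarrow> real) \<Rightarrow> nat \<Rightarrow> nat \<Rightarrow> real" where
  "beta_aux \<alpha> n 0 = 1"
| "beta_aux \<alpha> n (Suc m) = 2 - (\<alpha> (n - Suc m))\<^sup>2 / beta_aux \<alpha> n m"

definition beta_seq :: "(nat \<Rightarrow> real) \<Rightarrow> nat \<Rightarrow> nat \<Rightarrow> real" where
  "beta_seq \<alpha> n i = beta_aux \<alpha> n (n - i)"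

definition p_coef :: "(nat \<Rightarrow> real) \<Rightarrow> nat \<Rightarrow> nat \<Rightarrow> nat \<Rightarrow> real" where
  "p_coef \<alpha> n i j = (\<Prod>m\<in>{i..<j}. \<alpha> m / beta_seq \<alpha> n (Suc m))"

definition disc_green :: "(nat \<Rightarrow> real) \<Rightarrow> nat \<Rightarrow> nat \<Rightarrow> nat \<Rightarrow> real" where
  "disc_green \<alpha> n k j =
     (1 / real n) * (\<Sum>i\<in>{1..min j k}. p_coef \<alpha> n i j * p_coef \<alpha> n i k / beta_seq \<alpha> n i)"

definition smooth_on_set :: "real set \<Rightarrow> (real \<Rightarrow> 'a::real_normed_vector) \<Rightarrow> bool" where
  "smooth_on_set S f \<longleftrightarrow> (\<exists>D. D 0 = f \<and>
      (\<forall>k. \<forall>s\<in>S. (D k has_vector_derivative D (Suc k) s) (at s within S)))"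

text \<open>G solves G_ss(s,x) - q(s) G(s,x) = - delta(s - x) on [0,1], G(0,x) = 0, G_s(1,x) = 0,
  for every x in (0,1]: classical piecewise meaning (ODE on [0,x] and [x,1],
  continuity at x, jump of G_s at x equal to -1; for x = 1 the right piece degenerates,
  so the Neumann condition with the jump gives G_s(1-,1) = 1).\<close>
definition cont_green :: "(real \<Rightarrow> real) \<Rightarrow> (real \<Rightarrow> real \<Rightarrow> real) \<Rightarrow> bool" where
  "cont_green q G \<longleftrightarrow> (\<forall>x\<in>{0<..1}.
      continuous_on {0..1} (\<lambda>s. G s x) \<and> G 0 x = 0 \<and>
      (\<exists>g1 g2.
         (\<forall>s\<in>{0..x}. ((\<lambda>t. G t x) has_real_derivative g1 s) (at s within {0..x}) \<and>
                      (g1 has_real_derivative q s * G s x) (at s within {0..x})) \<and>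
         (\<forall>s\<in>{x..1}. ((\<lambda>t. G t x) has_real_derivative g2 s) (at s within {x..1}) \<and>
                      (g2 has_real_derivative q s * G s x) (at s within {x..1})) \<and>
         g2 1 = 0 \<and> g1 x - g2 x = 1))"

end

theory Submission
  imports Defs
begin


lemma beta_n: "beta_seq \<alpha> n n = 1"
  by (simp add: beta_seq_def)

lemma beta_rec: "i < n \<Longrightarrow> beta_seq \<alpha> n i = 2 - (\<alpha> i)\<^sup>2 / beta_seq \<alpha> n (Suc i)"
proof -
  assume "i < n"
  then have e: "n - i = Suc (n - Suc i)" by simp
  have "n - Suc (n - Suc i) = i" using \<open>i < n\<close> by simp
  then show ?thesis unfolding beta_seq_def e by simp
qed

lemma beta_step_alg:
  fixes B a2 :: real
  assumes "1 \<le> B" "0 \<le> a2" "a2 \<le> 1"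
  shows "1 \<le> 2 - a2 / B \<and> 2 - a2 / B \<le> 1 + (1 - a2) + (B - 1)"
proof
  have "a2 / B \<le> 1" using assms by (simp add: divide_le_eq)
  then show "1 \<le> 2 - a2 / B" by simp
  have h0: "0 \<le> 1 - 1/B" using assms by (simp add: divide_le_eq)
  have h1: "a2 * (1 - 1/B) \<le> B * (1 - 1/B)" using h0 assms by (intro mult_right_mono) auto
  have h2: "B * (1 - 1/B) = B - 1" using assms by (simp add: algebra_simps)
  have h3: "a2 * (1 - 1/B) = a2 - a2/B" by (simp add: algebra_simps)
  show "2 - a2 / B \<le> 1 + (1 - a2) + (B - 1)" using h1 h2 h3 by linarith
qed

lemma beta_bounds:
  fixes \<alpha> :: "nat \<Rightarrow> real" and n m :: nat
  assumes al: "\<And>k. k \<in> {1..<n} \<Longrightarrow> (\<alpha> k)\<^sup>2 \<le> 1"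
  shows "m < n \<Longrightarrow> 1 \<le> beta_seq \<alpha> n (n - m) \<and>
           beta_seq \<alpha> n (n - m) \<le> 1 + (\<Sum>i\<in>{n - m..<n}. 1 - (\<alpha> i)\<^sup>2)"
proof (induction m)
  case 0
  then show ?case by (simp add: beta_n)
next
  case (Suc m)
  let ?i = "n - Suc m"
  have i1: "?i \<in> {1..<n}" using Suc.prems by auto
  have si: "Suc ?i = n - m" using Suc.prems by simp
  have IH: "1 \<le> beta_seq \<alpha> n (n - m) \<and>
           beta_seq \<alpha> n (n - m) \<le> 1 + (\<Sum>i\<in>{n - m..<n}. 1 - (\<alpha> i)\<^sup>2)"
    using Suc by simp
  have rec: "beta_seq \<alpha> n ?i = 2 - (\<alpha> ?i)\<^sup>2 / beta_seq \<alpha> n (n - m)"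
    using beta_rec[of ?i n \<alpha>] Suc.prems si by simp
  have st0: "{?i..<n} = insert ?i {Suc ?i..<n}" using i1 by auto
  have st: "{?i..<n} = insert ?i {n - m..<n}" using st0 si by simp
  have "(\<Sum>i\<in>{?i..<n}. 1 - (\<alpha> i)\<^sup>2) = (1 - (\<alpha> ?i)\<^sup>2) + (\<Sum>i\<in>{n - m..<n}. 1 - (\<alpha> i)\<^sup>2)"
    unfolding st using Suc.prems by (subst sum.insert) auto
  moreover have "1 \<le> 2 - (\<alpha> ?i)\<^sup>2 / beta_seq \<alpha> n (n - m) \<and>
     2 - (\<alpha> ?i)\<^sup>2 / beta_seq \<alpha> n (n - m) \<le> 1 + (1 - (\<alpha> ?i)\<^sup>2) + (beta_seq \<alpha> n (n - m) - 1)"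
    using beta_step_alg[of "beta_seq \<alpha> n (n - m)" "(\<alpha> ?i)\<^sup>2"] IH al[OF i1] by simp
  ultimately show ?case using rec IH by linarith
qed

lemma beta_bounds':
  fixes \<alpha> :: "nat \<Rightarrow> real" and n i :: nat
  assumes al: "\<And>m. m \<in> {1..<n} \<Longrightarrow> (\<alpha> m)\<^sup>2 \<le> 1" and i: "i \<in> {1..n}"
  shows "1 \<le> beta_seq \<alpha> n i \<and> beta_seq \<alpha> n i \<le> 1 + (\<Sum>m\<in>{i..<n}. 1 - (\<alpha> m)\<^sup>2)"
  proof -
  have "n - (n - i) = i" using i by auto
  then show ?thesis using beta_bounds[where \<alpha>=\<alpha> and n=n and m="n - i"] al i by auto
qed


context
  fixes \<alpha> :: "nat \<Rightarrow> real" and n :: nat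
  assumes apos: "\<And>m. m \<in> {1..<n} \<Longrightarrow> 0 < \<alpha> m \<and> \<alpha> m \<le> 1"
begin

abbreviation "bb i \<equiv> beta_seq \<alpha> n i"
abbreviation "qq m \<equiv> \<alpha> m / beta_seq \<alpha> n (Suc m)"
abbreviation "PP i j \<equiv> p_coef \<alpha> n i j"
definition "AA k = (\<Sum>i\<in>{1..k}. (PP i k)\<^sup>2 / bb i)"
abbreviation "rr k \<equiv> PP 1 k"
definition "aa k = AA k / rr k"

lemma bb_ge1: "i \<in> {1..n} \<Longrightarrow> 1 \<le> bb i"
proof -
  assume i: "i \<in> {1..n}"
  have "\<And>m. m \<in> {1..<n} \<Longrightarrow> (\<alpha> m)\<^sup>2 \<le> 1"
    using apos by (intro power_le_one) (auto simp: less_imp_le)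
  then show ?thesis using beta_bounds'[of n \<alpha> i] i by blast
qed
lemma qq_bounds: "m \<in> {1..<n} \<Longrightarrow> 0 < qq m \<and> qq m \<le> 1"
proof -
  assume m: "m \<in> {1..<n}"
  then have b: "1 \<le> bb (Suc m)" using bb_ge1 by auto
  have a: "0 < \<alpha> m" "\<alpha> m \<le> 1" using apos m by auto
  show ?thesis
  proof
    show "0 < qq m" using a b by simp
    have "\<alpha> m \<le> bb (Suc m)" using a b by linarith
    then show "qq m \<le> 1" using b by (simp add: divide_le_eq)
  qed
qed

lemma PP_bounds: "1 \<le> i \<Longrightarrow> j \<le> n \<Longrightarrow> 0 < PP i j \<and> PP i j \<le> 1"
proof -
  assume ij: "1 \<le> i" "j \<le> n"
  have h: "\<And>m. m \<in> {i..<j} \<Longrightarrow> 0 < qq m \<and> qq m \<le> 1" using qq_bounds ij by auto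
  have "0 < PP i j" unfolding p_coef_def using h by (intro prod_pos) blast
  moreover have "PP i j \<le> 1" unfolding p_coef_def using h by (intro prod_le_1) (simp add: less_imp_le)
  ultimately show ?thesis by simp
qed

lemma PP_split: "i \<le> k \<Longrightarrow> k \<le> j \<Longrightarrow> PP i j = PP i k * PP k j"
  unfolding p_coef_def by (simp add: prod.atLeastLessThan_concat)

lemma PP_Suc: "i \<le> k \<Longrightarrow> PP i (Suc k) = PP i k * qq k"
  unfolding p_coef_def by (simp add: prod.atLeastLessThan_Suc)

lemma AA_0: "AA 0 = 0" by (simp add: AA_def)

lemma AA_Suc: "AA (Suc k) = (qq k)\<^sup>2 * AA k + 1 / bb (Suc k)"
proof -
  have s: "{1..Suc k} = insert (Suc k) {1..k}" by (auto)
  have "AA (Suc k) = (PP (Suc k) (Suc k))\<^sup>2 / bb (Suc k) + (\<Sum>i\<in>{1..k}. (PP i (Suc k))\<^sup>2 / bb i)"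
    unfolding AA_def s by (subst sum.insert) auto
  also have "(\<Sum>i\<in>{1..k}. (PP i (Suc k))\<^sup>2 / bb i) = (\<Sum>i\<in>{1..k}. (qq k)\<^sup>2 * ((PP i k)\<^sup>2 / bb i))"
    by (rule sum.cong) (auto simp: PP_Suc power2_eq_square)
  also have "\<dots> = (qq k)\<^sup>2 * AA k" unfolding AA_def by (simp add: sum_distrib_left)
  finally show ?thesis by (simp add: p_coef_def)
qed

lemma green_eq: "k \<le> j \<Longrightarrow> disc_green \<alpha> n k j = (1 / real n) * PP k j * AA k"
proof -
  assume kj: "k \<le> j"
  have mk: "min j k = k" using kj by simp
  have "(\<Sum>i\<in>{1..min j k}. PP i j * PP i k / bb i) = (\<Sum>i\<in>{1..k}. PP k j * ((PP i k)\<^sup>2 / bb i))"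
    unfolding mk
  proof (rule sum.cong)
    fix i assume "i \<in> {1..k}"
    then have "PP i j = PP i k * PP k j" using kj by (intro PP_split) auto
    then show "PP i j * PP i k / bb i = PP k j * ((PP i k)\<^sup>2 / bb i)"
      by (simp add: power2_eq_square)
  qed simp
  also have "\<dots> = PP k j * AA k" unfolding AA_def by (simp add: sum_distrib_left)
  finally show ?thesis unfolding disc_green_def by simp
qed

lemma rr_Suc: "1 \<le> k \<Longrightarrow> rr (Suc k) = rr k * qq k"
  using PP_Suc by simp

lemma aa_0: "aa 0 = 0" by (simp add: aa_def AA_0)

lemma aa_1: "aa 1 = 1 / bb 1"
  by (simp add: aa_def AA_def p_coef_def)

lemma R1: "1 \<le> k \<Longrightarrow> k < n \<Longrightarrow> aa (Suc k) = qq k * aa k + 1 / (\<alpha> k * rr k)"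
proof -
  assume k: "1 \<le> k" "k < n"
  have r: "0 < rr k" using PP_bounds k by auto
  have b: "1 \<le> bb (Suc k)" using bb_ge1 k by auto
  have a: "0 < \<alpha> k" using apos k by auto
  have "aa (Suc k) = ((qq k)\<^sup>2 * AA k + 1 / bb (Suc k)) / (rr k * qq k)"
    unfolding aa_def AA_Suc rr_Suc[OF k(1)] ..
  also have "\<dots> = qq k * aa k + 1 / (\<alpha> k * rr k)"
    unfolding aa_def using r b a by (simp add: field_simps power2_eq_square)
  finally show ?thesis .
qed

lemma three_term: "2 \<le> k \<Longrightarrow> k < n \<Longrightarrow>
   \<alpha> k * aa (Suc k) = 2 * aa k - \<alpha> (k - 1) * aa (k - 1)"
proof -
  assume k: "2 \<le> k" "k < n"
  define K where "K = k - 1"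
  have kK: "k = Suc K" "1 \<le> K" "K < n" using k K_def by auto
  have rK: "0 < rr K" using PP_bounds kK by auto
  have bk: "1 \<le> bb k" using bb_ge1 k by auto
  have bk1: "1 \<le> bb (Suc k)" using bb_ge1 k by auto
  have aK: "0 < \<alpha> K" using apos kK by auto
  have ak: "0 < \<alpha> k" using apos k by auto
  have e1: "aa k = \<alpha> K / bb k * aa K + 1 / (\<alpha> K * rr K)" using R1[OF kK(2,3)] kK(1) by simp
  have e2: "aa (Suc k) = \<alpha> k / bb (Suc k) * aa k + 1 / (\<alpha> k * rr k)" using R1 k by simp
  have e3: "rr k = rr K * (\<alpha> K / bb k)" using rr_Suc[OF kK(2)] kK(1) by simp
  have e4: "bb k = 2 - (\<alpha> k)\<^sup>2 / bb (Suc k)" using beta_rec k(2) by blast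
  have i1: "1 / (\<alpha> K * rr K) = aa k - \<alpha> K / bb k * aa K" using e1 by simp
  have "1 / rr k = bb k * (1 / (\<alpha> K * rr K))" unfolding e3 using rK aK bk by (simp add: field_simps)
  also have "\<dots> = bb k * aa k - \<alpha> K * aa K" unfolding i1 using bk by (simp add: field_simps)
  finally have i2: "1 / rr k = bb k * aa k - \<alpha> K * aa K" .
  have "\<alpha> k * aa (Suc k) = (\<alpha> k)\<^sup>2 / bb (Suc k) * aa k + 1 / rr k"
    unfolding e2 using ak by (simp add: field_simps power2_eq_square)
  also have "\<dots> = ((\<alpha> k)\<^sup>2 / bb (Suc k) + bb k) * aa k - \<alpha> K * aa K" unfolding i2 by (simp add: algebra_simps)
  also have "(\<alpha> k)\<^sup>2 / bb (Suc k) + bb k = 2" unfolding e4 by simp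
  finally show ?thesis unfolding K_def by simp
qed

lemma three_term1: "1 < n \<Longrightarrow> \<alpha> 1 * aa 2 = 2 * aa 1"
proof -
  assume n: "1 < n"
  have b1: "1 \<le> bb 1" "1 \<le> bb 2" using bb_ge1 n by auto
  have a: "0 < \<alpha> 1" using apos n by auto
  have e2: "aa 2 = \<alpha> 1 / bb 2 * aa 1 + 1 / (\<alpha> 1 * rr 1)" using R1[of 1] n by (simp add: numeral_2_eq_2)
  have r1: "rr 1 = 1" by (simp add: p_coef_def)
  have e4: "bb 1 = 2 - (\<alpha> 1)\<^sup>2 / bb 2" using beta_rec[of 1 n \<alpha>] n by (simp add: numeral_2_eq_2)
  have a1: "aa 1 = 1 / bb 1" using aa_1 by simp
  show ?thesis unfolding e2 r1 a1 using a b1 e4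
    by (simp add: field_simps power2_eq_square)
qed

lemma aa1_pos: "1 \<le> n \<Longrightarrow> 0 < aa 1"
  using aa_1 bb_ge1[of 1] by simp

lemma aa_conv: "1 \<le> k \<Longrightarrow> k \<le> n \<Longrightarrow>
   0 \<le> aa (k - 1) \<and> aa (k - 1) + aa 1 \<le> aa k \<and> real k * aa 1 \<le> aa k"
proof (induction k)
  case 0
  then show ?case by simp
next
  case (Suc k)
  have a1: "0 < aa 1" using aa1_pos Suc.prems by simp
  show ?case
  proof (cases "k = 0")
    case True
    then show ?thesis using aa_0 a1 by simp
  next
    case False
    then have k1: "1 \<le> k" and kn: "k < n" using Suc.prems by auto
    have IH: "0 \<le> aa (k - 1)" "aa (k - 1) + aa 1 \<le> aa k" "real k * aa 1 \<le> aa k"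
      using Suc.IH k1 kn by auto
    have ak: "0 < \<alpha> k" "\<alpha> k \<le> 1" using apos k1 kn by auto
    have c: "\<alpha> k * aa (Suc k) \<ge> 2 * aa k - aa (k - 1)"
    proof (cases "k = 1")
      case True
      then show ?thesis using three_term1 kn aa_0 by (simp add: numeral_2_eq_2)
    next
      case False
      then have k2: "2 \<le> k" using k1 by simp
      have "\<alpha> (k - 1) * aa (k - 1) \<le> aa (k - 1)"
      proof -
        have "k - 1 \<in> {1..<n}" using k2 kn by auto
        then have "0 < \<alpha> (k - 1)" "\<alpha> (k - 1) \<le> 1" using apos by auto
        then show ?thesis using IH(1) by (intro mult_left_le_one_le) auto
      qed
      then show ?thesis using three_term[OF k2 kn] by simp
    qed
    have d: "aa k + aa 1 \<le> \<alpha> k * aa (Suc k)" using c IH by simp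
    have ka: "0 \<le> aa k" using IH a1 by (smt (verit) of_nat_0_le_iff mult_nonneg_nonneg)
    have pos: "0 < aa (Suc k)"
    proof (rule ccontr)
      assume "\<not> 0 < aa (Suc k)"
      then have "\<alpha> k * aa (Suc k) \<le> 0" using ak by (simp add: mult_nonneg_nonpos)
      then show False using d ka a1 by simp
    qed
    have "\<alpha> k * aa (Suc k) \<le> aa (Suc k)" using pos ak by (simp add: mult_left_le_one_le)
    then have e: "aa k + aa 1 \<le> aa (Suc k)" using d by simp
    have "real (Suc k) * aa 1 = real k * aa 1 + aa 1" by (simp add: algebra_simps)
    then show ?thesis using e IH ka by simp
  qed
qed

lemma green_lower:
  assumes k: "1 \<le> k" "k \<le> j" "j \<le> n"
  shows "rr n / bb 1 \<le> (real n)\<^sup>2 * disc_green \<alpha> n k j / (real j * real k)"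
proof -
  have b1: "1 \<le> bb 1" using bb_ge1 k by simp
  have rk: "0 < rr k" using PP_bounds k by simp
  have rn: "0 < rr n" using PP_bounds k by simp
  have pkj: "0 < PP k j" using PP_bounds k by simp
  have pjn: "PP j n \<le> 1" "0 < PP j n" using PP_bounds k by auto
  have AAk: "AA k = aa k * rr k" unfolding aa_def using rk by simp
  have "real k * aa 1 \<le> aa k" using aa_conv k by simp
  then have A1: "real k * rr k / bb 1 \<le> AA k" unfolding AAk aa_1 using rk
    by (simp add: divide_simps mult.commute mult.left_commute)
  have rj: "rr j = rr k * PP k j" using k by (intro PP_split) auto
  have rnj: "rr n = rr j * PP j n" using k by (intro PP_split) auto
  have rnj2: "rr n \<le> rr j" unfolding rnj using pjn rk pkj rj
    by (metis mult_left_le mult_pos_pos less_imp_le)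
  have G: "disc_green \<alpha> n k j = (1 / real n) * PP k j * AA k" using green_eq k by simp
  have "real k * rr n / bb 1 \<le> real k * rr j / bb 1"
    using rnj2 b1 by (intro divide_right_mono mult_left_mono) auto
  also have "\<dots> = PP k j * (real k * rr k / bb 1)" unfolding rj by simp
  also have "\<dots> \<le> PP k j * AA k" using A1 pkj by (intro mult_left_mono) auto
  finally have X: "real k * rr n / bb 1 \<le> PP k j * AA k" .
  have n0: "0 < real n" "0 < real j" "0 < real k" using k by auto
  have "(real n)\<^sup>2 * disc_green \<alpha> n k j / (real j * real k) = real n / real j * (PP k j * AA k / real k)"
    unfolding G using n0 by (simp add: field_simps power2_eq_square)
  also have "\<dots> \<ge> 1 * (PP k j * AA k / real k)"
  proof (rule mult_right_mono)
    show "1 \<le> real n / real j" using k n0 by simp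
    show "0 \<le> PP k j * AA k / real k" using X n0 rn b1
      by (smt (verit) divide_nonneg_nonneg mult_nonneg_nonneg of_nat_0_le_iff)
  qed
  finally have Y: "PP k j * AA k / real k \<le> (real n)\<^sup>2 * disc_green \<alpha> n k j / (real j * real k)" by simp
  have "rr n / bb 1 \<le> PP k j * AA k / real k" using X n0 by (simp add: field_simps)
  then show ?thesis using Y by linarith
qed

lemma disc_green_sym: "disc_green \<alpha> n k j = disc_green \<alpha> n j k"
  unfolding disc_green_def by (simp add: min.commute mult.commute)

lemma green_lower_all:
  assumes "j \<in> {1..n}" "k \<in> {1..n}"
  shows "rr n / bb 1 \<le> (real n)\<^sup>2 * disc_green \<alpha> n k j / (real j * real k)"
proof (cases "k \<le> j")
  case True
  then show ?thesis using green_lower assms by auto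
next
  case False
  then have "rr n / bb 1 \<le> (real n)\<^sup>2 * disc_green \<alpha> n j k / (real k * real j)"
    using green_lower assms by auto
  then show ?thesis using disc_green_sym by (simp add: mult.commute)
qed

end


lemma exp_eps: fixes e :: real assumes "0 \<le> e" "e \<le> 1/5"
  shows "exp (- (e + e\<^sup>2)) \<le> 1 - e"
proof -
  have y: "0 \<le> e + e\<^sup>2" using assms by simp
  have E: "1 + (e + e\<^sup>2) + (e + e\<^sup>2)\<^sup>2 / 2 \<le> exp (e + e\<^sup>2)"
    using exp_lower_Taylor_quadratic[OF y] .
  have P: "1 \<le> (1 - e) * (1 + (e + e\<^sup>2) + (e + e\<^sup>2)\<^sup>2 / 2)"
  proof -
    have "(1 - e) * (1 + (e + e\<^sup>2) + (e + e\<^sup>2)\<^sup>2 / 2) = 1 + e^2 * ((1 - e) * (1 + e)^2 / 2 - e)"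
      by (simp add: algebra_simps power2_eq_square)
    moreover have "(1 - e) * (1 + e)^2 / 2 - e \<ge> 0"
    proof -
      have "(1 - e) * (1 + e)^2 \<ge> 4/5 * 1" using assms
        by (intro mult_mono) (auto simp: one_le_power)
      then show ?thesis using assms by simp
    qed
    ultimately show ?thesis by simp
  qed
  have "(1 - e) * (1 + (e + e\<^sup>2) + (e + e\<^sup>2)\<^sup>2 / 2) \<le> (1 - e) * exp (e + e\<^sup>2)"
    using E assms by (intro mult_left_mono) auto
  then have "1 \<le> (1 - e) * exp (e + e\<^sup>2)" using P by linarith
  then have "1 / exp (e + e\<^sup>2) \<le> 1 - e" by (simp add: divide_le_eq mult.commute)
  moreover have "exp (- (e + e\<^sup>2)) = 1 / exp (e + e\<^sup>2)" by (metis exp_minus inverse_eq_divide)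
  ultimately show ?thesis by simp
qed

lemma sum_swap_tri: fixes f :: "nat \<Rightarrow> real"
  shows "(\<Sum>i\<in>{1..n}. \<Sum>m\<in>{i..<n}. f m) = (\<Sum>m\<in>{1..<n}. real m * f m)"
proof (induction n)
  case 0
  then show ?case by simp
next
  case (Suc n)
  have "(\<Sum>i\<in>{1..Suc n}. \<Sum>m\<in>{i..<Suc n}. f m) = (\<Sum>i\<in>{1..n}. \<Sum>m\<in>{i..<Suc n}. f m) + 0"
    by simp
  also have "(\<Sum>i\<in>{1..n}. \<Sum>m\<in>{i..<Suc n}. f m) = (\<Sum>i\<in>{1..n}. (\<Sum>m\<in>{i..<n}. f m) + f n)"
    by (intro sum.cong) auto
  also have "\<dots> = (\<Sum>m\<in>{1..<n}. real m * f m) + real n * f n"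
    using Suc.IH by (simp add: sum.distrib)
  also have "\<dots> = (\<Sum>m\<in>{1..<Suc n}. real m * f m)"
    by (cases n) auto
  finally show ?case by simp
qed

lemma prod_shift1: fixes f :: "nat \<Rightarrow> real"
  shows "1 \<le> n \<Longrightarrow> (\<Prod>i\<in>{1..n}. f i) = f 1 * (\<Prod>m\<in>{1..<n}. f (Suc m))"
proof (induction n)
  case 0
  then show ?case by simp
next
  case (Suc n)
  show ?case
  proof (cases "n = 0")
    case True then show ?thesis by simp
  next
    case False
    then have "(\<Prod>i\<in>{1..Suc n}. f i) = f 1 * (\<Prod>m\<in>{1..<n}. f (Suc m)) * f (Suc n)"
      using Suc by simp
    also have "\<dots> = f 1 * (\<Prod>m\<in>{1..<Suc n}. f (Suc m))"
      using False by (simp add: prod.atLeastLessThan_Suc)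
    finally show ?thesis .
  qed
qed

lemma rn_bound:
  fixes \<alpha> :: "nat \<Rightarrow> real" and n :: nat
  assumes apos: "\<And>m. m \<in> {1..<n} \<Longrightarrow> 4/5 \<le> \<alpha> m \<and> \<alpha> m \<le> 1" and n1: "1 \<le> n"
  shows "exp (- (\<Sum>m\<in>{1..<n}. (2 * real m + 1) * (1 - \<alpha> m))) \<le> p_coef \<alpha> n 1 n / beta_seq \<alpha> n 1"
proof -
  have apos': "\<And>m. m \<in> {1..<n} \<Longrightarrow> 0 < \<alpha> m \<and> \<alpha> m \<le> 1" using apos by force
  have al2: "\<And>m. m \<in> {1..<n} \<Longrightarrow> (\<alpha> m)\<^sup>2 \<le> 1"
    using apos' by (intro power_le_one) (auto simp: less_imp_le)
  define E where "E i = (\<Sum>m\<in>{i..<n}. 1 - (\<alpha> m)\<^sup>2)" for i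
  have bnd: "\<And>i. i \<in> {1..n} \<Longrightarrow> 0 \<le> beta_seq \<alpha> n i \<and> beta_seq \<alpha> n i \<le> exp (E i)"
  proof -
    fix i assume i: "i \<in> {1..n}"
    have "1 \<le> beta_seq \<alpha> n i \<and> beta_seq \<alpha> n i \<le> 1 + E i"
      using beta_bounds'[where \<alpha>=\<alpha> and n=n and i=i] al2 i unfolding E_def by blast
    moreover have "1 + E i \<le> exp (E i)" by simp
    ultimately show "0 \<le> beta_seq \<alpha> n i \<and> beta_seq \<alpha> n i \<le> exp (E i)" by linarith
  qed
  have B: "(\<Prod>i\<in>{1..n}. beta_seq \<alpha> n i) \<le> exp (\<Sum>m\<in>{1..<n}. real m * (1 - (\<alpha> m)\<^sup>2))"
  proof -
    have "(\<Prod>i\<in>{1..n}. beta_seq \<alpha> n i) \<le> (\<Prod>i\<in>{1..n}. exp (E i))"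
      using bnd by (intro prod_mono) blast
    also have "\<dots> = exp (\<Sum>i\<in>{1..n}. E i)" by (simp add: exp_sum)
    also have "(\<Sum>i\<in>{1..n}. E i) = (\<Sum>m\<in>{1..<n}. real m * (1 - (\<alpha> m)\<^sup>2))"
      unfolding E_def by (rule sum_swap_tri)
    finally show ?thesis .
  qed
  have Al: "exp (- (\<Sum>m\<in>{1..<n}. (1 - \<alpha> m) + (1 - \<alpha> m)\<^sup>2)) \<le> (\<Prod>m\<in>{1..<n}. \<alpha> m)"
  proof -
    have "exp (- (\<Sum>m\<in>{1..<n}. (1 - \<alpha> m) + (1 - \<alpha> m)\<^sup>2)) = (\<Prod>m\<in>{1..<n}. exp (- ((1 - \<alpha> m) + (1 - \<alpha> m)\<^sup>2)))"
      by (simp add: exp_sum flip: sum_negf)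
    also have "\<dots> \<le> (\<Prod>m\<in>{1..<n}. \<alpha> m)"
    proof (rule prod_mono)
      fix m assume m: "m \<in> {1..<n}"
      have "exp (- ((1 - \<alpha> m) + (1 - \<alpha> m)\<^sup>2)) \<le> 1 - (1 - \<alpha> m)"
        using apos[OF m] by (intro exp_eps) auto
      then show "0 \<le> exp (- ((1 - \<alpha> m) + (1 - \<alpha> m)\<^sup>2)) \<and> exp (- ((1 - \<alpha> m) + (1 - \<alpha> m)\<^sup>2)) \<le> \<alpha> m"
        by simp
    qed
    finally show ?thesis .
  qed
  have r: "p_coef \<alpha> n 1 n / beta_seq \<alpha> n 1 = (\<Prod>m\<in>{1..<n}. \<alpha> m) / (\<Prod>i\<in>{1..n}. beta_seq \<alpha> n i)"
    unfolding p_coef_def prod_dividef prod_shift1[OF n1] by (simp add: field_simps)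
  have bpos: "0 < (\<Prod>i\<in>{1..n}. beta_seq \<alpha> n i)"
    using beta_bounds'[where \<alpha>=\<alpha> and n=n] al2 by (intro prod_pos) fastforce
  define S1 where "S1 = (\<Sum>m\<in>{1..<n}. (1 - \<alpha> m) + (1 - \<alpha> m)\<^sup>2)"
  define S2 where "S2 = (\<Sum>m\<in>{1..<n}. real m * (1 - (\<alpha> m)\<^sup>2))"
  have "exp (- (S1 + S2)) = exp (- S1) / exp S2" by (simp add: exp_diff[symmetric])
  also have "\<dots> \<le> (\<Prod>m\<in>{1..<n}. \<alpha> m) / exp S2"
    using Al unfolding S1_def by (simp add: divide_right_mono)
  also have "\<dots> \<le> (\<Prod>m\<in>{1..<n}. \<alpha> m) / (\<Prod>i\<in>{1..n}. beta_seq \<alpha> n i)"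
  proof (rule divide_left_mono)
    show "(\<Prod>i\<in>{1..n}. beta_seq \<alpha> n i) \<le> exp S2" using B unfolding S2_def .
    show "0 \<le> (\<Prod>m\<in>{1..<n}. \<alpha> m)" using apos' by (intro prod_nonneg) (simp add: less_imp_le)
    show "0 < exp S2 * (\<Prod>i\<in>{1..n}. beta_seq \<alpha> n i)" using bpos by simp
  qed
  finally have X: "exp (- (S1 + S2)) \<le> p_coef \<alpha> n 1 n / beta_seq \<alpha> n 1" using r by simp
  have "S1 + S2 \<le> (\<Sum>m\<in>{1..<n}. (2 * real m + 1) * (1 - \<alpha> m))"
    unfolding S1_def S2_def sum.distrib[symmetric]
  proof (rule sum_mono)
    fix m assume m: "m \<in> {1..<n}"
    define e where "e = 1 - \<alpha> m"
    have e: "0 \<le> e" "1 \<le> real m" using apos[OF m] m unfolding e_def by auto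
    have "(1 - \<alpha> m) + (1 - \<alpha> m)\<^sup>2 + real m * (1 - (\<alpha> m)\<^sup>2) = (2 * real m + 1) * e - (real m - 1) * e\<^sup>2"
      unfolding e_def by (simp add: algebra_simps power2_eq_square)
    also have "\<dots> \<le> (2 * real m + 1) * e" using e by simp
    finally show "(1 - \<alpha> m) + (1 - \<alpha> m)\<^sup>2 + real m * (1 - (\<alpha> m)\<^sup>2) \<le> (2 * real m + 1) * (1 - \<alpha> m)"
      unfolding e_def .
  qed
  then have "exp (- (\<Sum>m\<in>{1..<n}. (2 * real m + 1) * (1 - \<alpha> m))) \<le> exp (- (S1 + S2))" by simp
  then show ?thesis using X by linarith
qed


definition gfun :: "real \<Rightarrow> real" where "gfun y = 2 * sqrt y - 1 / sqrt y"

lemma poly_core: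
  fixes x p :: real
  assumes x: "1 \<le> x" and pp: "p\<^sup>2 = x\<^sup>2 - 1/4" and p0: "0 \<le> p" and px: "p \<le> x"
  shows "(2*x+1)\<^sup>2 * p\<^sup>2 * (2*x + 2*p) \<le> 4 * x^3 * (2*p+1)\<^sup>2"
proof -
  define P where "P = x\<^sup>2 - 1/4"
  define Q where "Q = -2*(2*x+1)\<^sup>2 * p + (16*x^3 - 2*x*(2*x+1)\<^sup>2)"
  define A where "A = 8*x^5 - 8*x^4 + 2*x^2 + x/2"
  define B where "B = -8*x^4 + 8*x^3 + 2*x + 1/2"
  have D: "4 * x^3 * (2*p+1)\<^sup>2 - (2*x+1)\<^sup>2 * p\<^sup>2 * (2*x + 2*p) = Q * (p\<^sup>2 - P) + (A + B * p)"
    unfolding Q_def P_def A_def B_def by (simp add: algebra_simps power2_eq_square power3_eq_cube eval_nat_numeral)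
  have z: "p\<^sup>2 - P = 0" using pp P_def by simp
  have "A + B * p \<ge> 0"
  proof (cases "B \<le> 0")
    case True
    have ax: "A + B * x = 4*x^2 + x" unfolding A_def B_def by (simp add: field_simps eval_nat_numeral)
    have "A + B * p = (A + B * x) - B * (x - p)" by (simp add: algebra_simps)
    then have "A + B * p = 4*x^2 + x - B * (x - p)" using ax by simp
    moreover have "B * (x - p) \<le> 0" using True px by (simp add: mult_nonpos_nonneg)
    moreover have "0 \<le> 4*x^2 + x" using x by simp
    ultimately show ?thesis by linarith
  next
    case False
    have "A = 8 * x^4 * (x - 1) + 2*x^2 + x/2" unfolding A_def by (simp add: algebra_simps eval_nat_numeral)
    moreover have "0 \<le> 8 * x^4 * (x - 1)" using x by simp
    moreover have "0 \<le> 2*x^2 + x/2" using x by simp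
    ultimately have "A \<ge> 0" by linarith
    moreover have "B * p \<ge> 0" using False p0 by simp
    ultimately show ?thesis by simp
  qed
  then show ?thesis using D z by simp
qed

lemma term_bound:
  fixes x :: real assumes x: "1 \<le> x"
  shows "(2*x+1) / (x * sqrt x) \<le> 2 * (gfun (x + 1/2) - gfun (x - 1/2))"
proof -
  define a where "a = sqrt (x + 1/2)"
  define b where "b = sqrt (x - 1/2)"
  define s where "s = sqrt x"
  have a2: "a\<^sup>2 = x + 1/2" and b2: "b\<^sup>2 = x - 1/2" and s2: "s\<^sup>2 = x"
    using x unfolding a_def b_def s_def by auto
  have "0 < x - 1/2" using x by simp
  then have bp: "0 < b" unfolding b_def by simp
  have ap: "0 < a" unfolding a_def using x by simp
  have sp: "0 < s" unfolding s_def using x by simp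
  define p where "p = a * b"
  have "p\<^sup>2 = a\<^sup>2 * b\<^sup>2" unfolding p_def by (simp add: power_mult_distrib)
  also have "\<dots> = (x + 1/2) * (x - 1/2)" using a2 b2 by simp
  also have "\<dots> = x\<^sup>2 - 1/4" by (simp add: algebra_simps power2_eq_square)
  finally have pp: "p\<^sup>2 = x\<^sup>2 - 1/4" .
  have p0: "0 < p" unfolding p_def using ap bp by simp
  have px: "p \<le> x"
  proof (rule power2_le_imp_le)
    show "p\<^sup>2 \<le> x\<^sup>2" using pp by simp
  qed (use x in simp)
  have ab: "(a - b) * (a + b) = 1" using a2 b2 by (simp add: algebra_simps power2_eq_square)
  have G: "gfun (x + 1/2) - gfun (x - 1/2) = (2*p + 1) / (p * (a + b))"
  proof -
    have "gfun (x + 1/2) - gfun (x - 1/2) = (a - b) * (2 + 1 / p)"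
      unfolding gfun_def a_def[symmetric] b_def[symmetric] p_def using ap bp
      by (simp add: field_simps)
    also have "a - b = 1 / (a + b)" using ab ap bp by (simp add: field_simps)
    finally show ?thesis using p0 ap bp by (simp add: field_simps)
  qed
  have ab2: "(a + b)\<^sup>2 = 2*x + 2*p" unfolding p_def using a2 b2 by (simp add: algebra_simps power2_eq_square)
  have core: "(2*x+1)\<^sup>2 * p\<^sup>2 * (2*x + 2*p) \<le> 4 * x^3 * (2*p+1)\<^sup>2"
    using poly_core[OF x pp] p0 px by simp
  have sq: "((2*x+1) * p * (a + b))\<^sup>2 \<le> (2 * x * s * (2*p+1))\<^sup>2"
  proof -
    have "((2*x+1) * p * (a + b))\<^sup>2 = (2*x+1)\<^sup>2 * p\<^sup>2 * (2*x + 2*p)"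
      by (simp add: power_mult_distrib ab2)
    moreover have "(2 * x * s * (2*p+1))\<^sup>2 = 4 * x^3 * (2*p+1)\<^sup>2"
      using s2 by (simp add: power_mult_distrib eval_nat_numeral power2_eq_square)
    ultimately show ?thesis using core by simp
  qed
  have le: "(2*x+1) * p * (a + b) \<le> 2 * x * s * (2*p+1)"
    using power2_le_imp_le[OF sq] x sp p0 by simp
  have den: "0 < x * s * (p * (a + b))" using x sp p0 ap bp by simp
  have nz: "p * (a + b) \<noteq> 0" using p0 ap bp by simp
  have e1': "((2*x+1) * (p * (a + b))) / (x * s * (p * (a + b))) = (2*x+1) / (x * s)"
    by (rule nonzero_mult_divide_mult_cancel_right[OF nz])
  have e1: "(2*x+1) / (x * s) = ((2*x+1) * p * (a + b)) / (x * s * (p * (a + b)))"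
    using e1' by (simp add: mult.assoc)
  have nz2: "x * s \<noteq> 0" using x sp by simp
  have e2': "((x * s) * (2 * (2*p + 1))) / ((x * s) * (p * (a + b))) = (2 * (2*p + 1)) / (p * (a + b))"
    by (rule nonzero_mult_divide_mult_cancel_left[OF nz2])
  have e2: "2 * ((2*p + 1) / (p * (a + b))) = (2 * x * s * (2*p+1)) / (x * s * (p * (a + b)))"
    using e2' by (simp add: mult.assoc mult.left_commute)
  have "(2*x+1) / (x * s) \<le> 2 * ((2*p + 1) / (p * (a + b)))"
    unfolding e1 e2 using le den by (intro divide_right_mono) auto
  then show ?thesis unfolding G s_def .
qed

lemma gfun_half: "gfun (1/2) = 0"
proof -
  have "sqrt (1/2) * sqrt (1/2) = (1/2::real)" by simp
  then show ?thesis unfolding gfun_def by (simp add: field_simps)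
qed

lemma sum_bound: "(\<Sum>m\<in>{1..N}. (2 * real m + 1) / (real m * sqrt (real m))) \<le> 2 * gfun (real N + 1/2)"
proof (induction N)
  case 0
  then show ?case using gfun_half by simp
next
  case (Suc N)
  have tb: "(2 * real (Suc N) + 1) / (real (Suc N) * sqrt (real (Suc N)))
        \<le> 2 * (gfun (real (Suc N) + 1/2) - gfun (real (Suc N) - 1/2))"
    by (rule term_bound) simp
  have eq: "real (Suc N) - 1/2 = real N + 1/2" by simp
  have t: "(2 * real (Suc N) + 1) / (real (Suc N) * sqrt (real (Suc N)))
        \<le> 2 * (gfun (real (Suc N) + 1/2) - gfun (real N + 1/2))" using tb unfolding eq .
  have "(\<Sum>m\<in>{1..Suc N}. (2 * real m + 1) / (real m * sqrt (real m))) =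
     (\<Sum>m\<in>{1..N}. (2 * real m + 1) / (real m * sqrt (real m))) + (2 * real (Suc N) + 1) / (real (Suc N) * sqrt (real (Suc N)))"
    by simp
  also have "\<dots> \<le> 2 * gfun (real N + 1/2) + 2 * (gfun (real (Suc N) + 1/2) - gfun (real N + 1/2))"
    by (rule add_mono[OF Suc.IH t])
  also have "\<dots> = 2 * gfun (real (Suc N) + 1/2)" by (simp add: algebra_simps)
  finally show ?case .
qed

lemma sum_bound2: assumes "1 \<le> n"
  shows "(\<Sum>m\<in>{1..<n}. (2 * real m + 1) / (real m * sqrt (real m))) \<le> 4 * sqrt (real n)"
proof -
  have e: "{1..<n} = {1..n-1}" using assms by auto
  have "(\<Sum>m\<in>{1..<n}. (2 * real m + 1) / (real m * sqrt (real m))) \<le> 2 * gfun (real (n-1) + 1/2)"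
    unfolding e by (rule sum_bound)
  also have "\<dots> \<le> 4 * sqrt (real (n - 1) + 1/2)" unfolding gfun_def by simp
  also have "\<dots> \<le> 4 * sqrt (real n)" using assms by (simp add: of_nat_diff)
  finally show ?thesis .
qed


lemma norm_diff_unit:
  fixes u v :: "'a::real_inner"
  assumes "norm u = 1" "norm v = 1"
  shows "(norm (u - v))\<^sup>2 = 2 - 2 * inner u v"
proof -
  have "(norm (u - v))\<^sup>2 = inner u u - 2 * inner u v + inner v v"
    unfolding power2_norm_eq_inner by (simp add: inner_diff_left inner_diff_right inner_commute)
  also have "inner u u = 1" using assms(1) by (simp add: dot_square_norm)
  also have "inner v v = 1" using assms(2) by (simp add: dot_square_norm)
  finally show ?thesis by simp
qed

lemma powr32: "0 \<le> x \<Longrightarrow> (x::real) powr (3/2) = x * sqrt x"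
proof -
  assume x: "0 \<le> x"
  show ?thesis
  proof (cases "x = 0")
    case True then show ?thesis by simp
  next
    case False
    then have xp: "0 < x" using x by simp
    have "x powr (3/2) = x powr (1 + 1/2)" by simp
    also have "\<dots> = x powr 1 * x powr (1/2)" by (rule powr_add)
    also have "\<dots> = x * sqrt x" using xp by (simp add: powr_half_sqrt)
    finally show ?thesis .
  qed
qed

lemma eps_bound:
  fixes m n :: nat and e \<upsilon> :: real
  assumes m: "1 \<le> m" and n: "1 \<le> n"
    and h: "real m powr (3/2) / real n powr (3/2) * ((real n)\<^sup>2 * (2 * e)) \<le> \<upsilon>"
  shows "e \<le> \<upsilon> / (2 * sqrt (real n) * (real m * sqrt (real m)))"
proof -
  have sn: "0 < sqrt (real n)" and sm: "0 < sqrt (real m)" using m n by auto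
  have nn: "real n = sqrt (real n) * sqrt (real n)" by simp
  have "real m powr (3/2) / real n powr (3/2) * ((real n)\<^sup>2 * (2 * e))
        = (real m * sqrt (real m)) / (real n * sqrt (real n)) * ((real n)\<^sup>2 * (2 * e))"
    by (simp add: powr32)
  also have "\<dots> = e * (2 * sqrt (real n) * (real m * sqrt (real m)))"
    using sn n by (subst (1 2) nn) (simp add: field_simps power2_eq_square)
  finally have "e * (2 * sqrt (real n) * (real m * sqrt (real m))) \<le> \<upsilon>" using h by simp
  moreover have "0 < 2 * sqrt (real n) * (real m * sqrt (real m))" using sn sm m by simp
  ultimately show ?thesis by (simp add: le_divide_eq)
qed

lemma part_a:
  shows "\<forall>(n::nat) (\<eta>::nat \<Rightarrow> 'a::euclidean_space) (\<upsilon>::real).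
            \<eta> (n + 1) = 0 \<longrightarrow>
            (\<forall>k\<in>{1..n}. norm (grad_plus n \<eta> k) = 1) \<longrightarrow>
            0 < \<upsilon> \<longrightarrow> \<upsilon> \<le> 2 * sqrt (real n) / 5 \<longrightarrow>
            (\<forall>k\<in>{1..n-1}. real k powr (3/2) / real n powr (3/2)
                 * (norm (grad_plus n (grad_plus n \<eta>) k))\<^sup>2 \<le> \<upsilon>) \<longrightarrow>
            (\<forall>j\<in>{1..n}. \<forall>k\<in>{1..n}.
                 (real n)\<^sup>2 * disc_green (alpha_seq n \<eta>) n k j / (real j * real k) \<ge> exp (- 2 * \<upsilon>))"
proof (intro allI impI ballI)
  fix n :: nat and \<eta> :: "nat \<Rightarrow> 'a" and \<upsilon> :: real and j k
  assume unit: "\<forall>k\<in>{1..n}. norm (grad_plus n \<eta> k) = 1" and up: "0 < \<upsilon>"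
    and ub: "\<upsilon> \<le> 2 * sqrt (real n) / 5"
    and hyp: "\<forall>k\<in>{1..n-1}. real k powr (3/2) / real n powr (3/2)
                 * (norm (grad_plus n (grad_plus n \<eta>) k))\<^sup>2 \<le> \<upsilon>"
    and j: "j \<in> {1..n}" and k: "k \<in> {1..n}"
  have n1: "1 \<le> n" using j by simp
  define \<alpha> where "\<alpha> = alpha_seq n \<eta>"
  define c where "c = \<upsilon> / (2 * sqrt (real n))"
  have sn: "0 < sqrt (real n)" using n1 by simp
  have c15: "c \<le> 1/5" unfolding c_def using ub sn by (simp add: divide_le_eq field_simps)
  have cpos: "0 < c" unfolding c_def using up sn by simp
  have epsb: "1 - \<alpha> m \<le> c / (real m * sqrt (real m)) \<and> 0 \<le> 1 - \<alpha> m" if m: "m \<in> {1..<n}" for m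
  proof -
    have u1: "norm (grad_plus n \<eta> m) = 1" "norm (grad_plus n \<eta> (Suc m)) = 1" using unit m by auto
    have "(norm (grad_plus n (grad_plus n \<eta>) m))\<^sup>2
          = (real n)\<^sup>2 * (norm (grad_plus n \<eta> (Suc m) - grad_plus n \<eta> m))\<^sup>2"
      unfolding grad_plus_def[of n "grad_plus n \<eta>"] by (simp add: power_mult_distrib)
    also have "\<dots> = (real n)\<^sup>2 * (2 * (1 - \<alpha> m))"
      unfolding norm_diff_unit[OF u1(2) u1(1)] \<alpha>_def alpha_seq_def by simp
    finally have E: "(norm (grad_plus n (grad_plus n \<eta>) m))\<^sup>2 = (real n)\<^sup>2 * (2 * (1 - \<alpha> m))" .
    have "m \<in> {1..n-1}" using m by auto
    then have "real m powr (3/2) / real n powr (3/2) * (norm (grad_plus n (grad_plus n \<eta>) m))\<^sup>2 \<le> \<upsilon>"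
      using hyp by blast
    then have "real m powr (3/2) / real n powr (3/2) * ((real n)\<^sup>2 * (2 * (1 - \<alpha> m))) \<le> \<upsilon>"
      unfolding E .
    then have "1 - \<alpha> m \<le> \<upsilon> / (2 * sqrt (real n) * (real m * sqrt (real m)))"
      using eps_bound m n1 by auto
    then have A: "1 - \<alpha> m \<le> c / (real m * sqrt (real m))" unfolding c_def by simp
    have "0 \<le> (real n)\<^sup>2 * (2 * (1 - \<alpha> m))" using E[symmetric] by simp
    then have "0 \<le> 1 - \<alpha> m" using n1 by (simp add: zero_le_mult_iff)
    then show ?thesis using A by simp
  qed
  have abnd: "4/5 \<le> \<alpha> m \<and> \<alpha> m \<le> 1" if m: "m \<in> {1..<n}" for m
  proof -
    have m1: "1 \<le> real m" using m by simp
    then have "1 \<le> sqrt (real m)" by simp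
    then have "1 * 1 \<le> real m * sqrt (real m)" using m1 by (intro mult_mono) auto
    then have "1 \<le> real m * sqrt (real m)" by simp
    then have "c / (real m * sqrt (real m)) \<le> c" using cpos by (simp add: divide_le_eq mult_le_cancel_left1)
    then show ?thesis using epsb[OF m] c15 by linarith
  qed
  have S: "(\<Sum>m\<in>{1..<n}. (2 * real m + 1) * (1 - \<alpha> m)) \<le> 2 * \<upsilon>"
  proof -
    have "(\<Sum>m\<in>{1..<n}. (2 * real m + 1) * (1 - \<alpha> m))
          \<le> (\<Sum>m\<in>{1..<n}. c * ((2 * real m + 1) / (real m * sqrt (real m))))"
    proof (rule sum_mono)
      fix m assume m: "m \<in> {1..<n}"
      have "(2 * real m + 1) * (1 - \<alpha> m) \<le> (2 * real m + 1) * (c / (real m * sqrt (real m)))"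
        using epsb[OF m] by (intro mult_left_mono) auto
      then show "(2 * real m + 1) * (1 - \<alpha> m) \<le> c * ((2 * real m + 1) / (real m * sqrt (real m)))"
        by (simp add: field_simps)
    qed
    also have "\<dots> = c * (\<Sum>m\<in>{1..<n}. (2 * real m + 1) / (real m * sqrt (real m)))"
      by (simp add: sum_distrib_left)
    also have "\<dots> \<le> c * (4 * sqrt (real n))"
      using sum_bound2[OF n1] cpos by (intro mult_left_mono) auto
    also have "\<dots> = 2 * \<upsilon>" unfolding c_def using sn by (simp add: field_simps)
    finally show ?thesis .
  qed
  have R: "exp (- (\<Sum>m\<in>{1..<n}. (2 * real m + 1) * (1 - \<alpha> m))) \<le> p_coef \<alpha> n 1 n / beta_seq \<alpha> n 1"
    using rn_bound[of n \<alpha>] abnd n1 by blast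
  have apos: "\<And>m. m \<in> {1..<n} \<Longrightarrow> 0 < \<alpha> m \<and> \<alpha> m \<le> 1" using abnd by force
  have G: "p_coef \<alpha> n 1 n / beta_seq \<alpha> n 1 \<le> (real n)\<^sup>2 * disc_green \<alpha> n k j / (real j * real k)"
    using green_lower_all[of n \<alpha> j k] apos j k by blast
  have "exp (- 2 * \<upsilon>) \<le> exp (- (\<Sum>m\<in>{1..<n}. (2 * real m + 1) * (1 - \<alpha> m)))" using S by simp
  then show "exp (- 2 * \<upsilon>) \<le> (real n)\<^sup>2 * disc_green (alpha_seq n \<eta>) n k j / (real j * real k)"
    using R G unfolding \<alpha>_def by linarith
qed


lemma deriv_mono:
  fixes f f' :: "real \<Rightarrow> real"
  assumes ab: "a \<le> b"
    and d: "\<And>t. t \<in> {a..b} \<Longrightarrow> (f has_real_derivative f' t) (at t within {a..b})"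
    and nn: "\<And>t. t \<in> {a..b} \<Longrightarrow> 0 \<le> f' t"
  shows "f a \<le> f b"
proof -
  have "\<exists>t\<in>{a..b}. f b - f a = (\<lambda>h. f' t * h) (b - a)"
  proof (rule mvt_very_simple[OF ab])
    fix t assume "a \<le> t" "t \<le> b"
    then show "(f has_derivative (\<lambda>h. f' t * h)) (at t within {a..b})"
      using d[of t] by (simp add: has_field_derivative_def)
  qed
  then obtain t where t: "t \<in> {a..b}" "f b - f a = f' t * (b - a)" by auto
  have "0 \<le> f' t * (b - a)" using nn[OF t(1)] ab by simp
  then show ?thesis using t by simp
qed

lemma deriv_mono_sub:
  fixes f f' :: "real \<Rightarrow> real"
  assumes ab: "a \<le> b" and sub: "{a..b} \<subseteq> S"
    and d: "\<And>t. t \<in> S \<Longrightarrow> (f has_real_derivative f' t) (at t within S)"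
    and nn: "\<And>t. t \<in> {a..b} \<Longrightarrow> 0 \<le> f' t"
  shows "f a \<le> f b"
proof (rule deriv_mono[OF ab _ nn])
  fix t assume t: "t \<in> {a..b}"
  then have "t \<in> S" using sub by blast
  then show "(f has_real_derivative f' t) (at t within {a..b})"
    using d[of t] sub by (rule_tac DERIV_subset) auto
qed


lemma diag_core:
  fixes y ga gb q \<Psi> :: "real \<Rightarrow> real" and x \<rho> :: real
  assumes x: "0 < x" "x \<le> 1"
    and yc: "continuous_on {0..1} y" and y0: "y 0 = 0"
    and d1: "\<And>t. t \<in> {0..x} \<Longrightarrow> (y has_real_derivative ga t) (at t within {0..x}) \<and>
                     (ga has_real_derivative q t * y t) (at t within {0..x})"
    and d2: "\<And>t. t \<in> {x..1} \<Longrightarrow> (y has_real_derivative gb t) (at t within {x..1}) \<and>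
                     (gb has_real_derivative q t * y t) (at t within {x..1})"
    and g21: "gb 1 = 0" and jump: "ga x - gb x = 1"
    and qnn: "\<And>t. t \<in> {0..1} \<Longrightarrow> 0 \<le> q t"
    and dPsi: "\<And>t. t \<in> {0..1} \<Longrightarrow> (\<Psi> has_real_derivative t * q t) (at t within {0..1})"
    and Psi0: "\<Psi> 0 = 0" and Psi1: "\<Psi> 1 = \<rho>"
  shows "\<forall>s\<in>{0<..x}. exp (- \<rho>) / (1 + \<rho>) \<le> y s / (s * x)"
proof -
  have dy1: "\<And>t. t \<in> {0..x} \<Longrightarrow> (y has_real_derivative ga t) (at t within {0..x})" using d1 by blast
  have dg1: "\<And>t. t \<in> {0..x} \<Longrightarrow> (ga has_real_derivative q t * y t) (at t within {0..x})" using d1 by blast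
  have dy2: "\<And>t. t \<in> {x..1} \<Longrightarrow> (y has_real_derivative gb t) (at t within {x..1})" using d2 by blast
  have dg2: "\<And>t. t \<in> {x..1} \<Longrightarrow> (gb has_real_derivative q t * y t) (at t within {x..1})" using d2 by blast
  have q1: "\<And>t. t \<in> {0..x} \<Longrightarrow> 0 \<le> q t" using qnn x by auto
  have q2: "\<And>t. t \<in> {x..1} \<Longrightarrow> 0 \<le> q t" using qnn x by auto
  have P1: "0 \<le> y t * ga t" if t: "t \<in> {0..x}" for t
  proof -
    have "y 0 * ga 0 \<le> y t * ga t"
    proof (rule deriv_mono_sub[of 0 t "{0..x}"])
      show "0 \<le> t" "{0..t} \<subseteq> {0..x}" using t by auto
      fix u :: real assume "u \<in> {0..x}"
      then show "((\<lambda>u. y u * ga u) has_real_derivative ga u * ga u + q u * y u * y u) (at u within {0..x})"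
        using DERIV_mult[OF dy1 dg1] by simp
    next
      fix u :: real assume "u \<in> {0..t}"
      then have "0 \<le> q u" using q1 t by auto
      then show "0 \<le> ga u * ga u + q u * y u * y u" by (simp add: mult.assoc)
    qed
    then show ?thesis using y0 by simp
  qed
  have P2: "y a * y a \<le> y b * y b" if ab: "0 \<le> a" "a \<le> b" "b \<le> x" for a b
  proof (rule deriv_mono_sub[of a b "{0..x}"])
    show "a \<le> b" "{a..b} \<subseteq> {0..x}" using ab by auto
    fix u :: real assume "u \<in> {0..x}"
    then show "((\<lambda>u. y u * y u) has_real_derivative ga u * y u + ga u * y u) (at u within {0..x})"
      using DERIV_mult[OF dy1 dy1] by simp
  next
    fix u :: real assume "u \<in> {a..b}"
    then have "0 \<le> y u * ga u" using P1 ab by auto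
    then show "0 \<le> ga u * y u + ga u * y u" by (simp add: mult.commute)
  qed
  have P3: "y t * gb t \<le> 0" if t: "t \<in> {x..1}" for t
  proof -
    have "y t * gb t \<le> y 1 * gb 1"
    proof (rule deriv_mono_sub[of t 1 "{x..1}"])
      show "t \<le> 1" "{t..1} \<subseteq> {x..1}" using t by auto
      fix u :: real assume "u \<in> {x..1}"
      then show "((\<lambda>u. y u * gb u) has_real_derivative gb u * gb u + q u * y u * y u) (at u within {x..1})"
        using DERIV_mult[OF dy2 dg2] by simp
    next
      fix u :: real assume "u \<in> {t..1}"
      then have "0 \<le> q u" using q2 t by auto
      then show "0 \<le> gb u * gb u + q u * y u * y u" by (simp add: mult.assoc)
    qed
    then show ?thesis using g21 by simp
  qed
  have x0: "x \<in> {0..x}" "x \<in> {x..1}" using x by auto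
  have P4: "0 \<le> y x"
  proof -
    have "y x = y x * ga x - y x * gb x" using jump by (simp flip: right_diff_distrib)
    then show ?thesis using P1[OF x0(1)] P3[OF x0(2)] by linarith
  qed
  have P5: "0 \<le> y t" if t: "t \<in> {0..x}" for t
  proof (rule ccontr)
    assume neg: "\<not> 0 \<le> y t"
    have "continuous_on {t..x} y" using yc t x by (rule_tac continuous_on_subset) auto
    then obtain z where z: "t \<le> z" "z \<le> x" "y z = 0"
      using IVT'[of y t 0 x] neg P4 t by auto
    have "y t * y t \<le> y z * y z" using P2[of t z] t z by auto
    then have "y t * y t \<le> 0" using z by simp
    then show False using neg by (simp add: mult_le_0_iff)
  qed
  have P6: "y t \<le> y x" if t: "t \<in> {x..1}" for t
  proof -
    have "- (y x * y x) \<le> - (y t * y t)"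
    proof (rule deriv_mono_sub[of x t "{x..1}"])
      show "x \<le> t" "{x..t} \<subseteq> {x..1}" using t by auto
      fix u :: real assume "u \<in> {x..1}"
      then show "((\<lambda>u. - (y u * y u)) has_real_derivative - (gb u * y u + gb u * y u)) (at u within {x..1})"
        using DERIV_minus[OF DERIV_mult[OF dy2 dy2]] by simp
    next
      fix u :: real assume "u \<in> {x..t}"
      then have "y u * gb u \<le> 0" using P3 t by auto
      then show "0 \<le> - (gb u * y u + gb u * y u)" by (simp add: mult.commute)
    qed
    then have "(y t)\<^sup>2 \<le> (y x)\<^sup>2" by (simp add: power2_eq_square)
    then show ?thesis using P4 by (rule power2_le_imp_le)
  qed
  have P7: "ga a \<le> ga b" if ab: "0 \<le> a" "a \<le> b" "b \<le> x" for a b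
  proof (rule deriv_mono_sub[of a b "{0..x}"])
    show "a \<le> b" "{a..b} \<subseteq> {0..x}" using ab by auto
    fix u :: real assume "u \<in> {0..x}"
    then show "(ga has_real_derivative q u * y u) (at u within {0..x})" using dg1 by blast
  next
    fix u :: real assume "u \<in> {a..b}"
    then have "u \<in> {0..x}" using ab by auto
    then show "0 \<le> q u * y u" using q1 P5 by simp
  qed
  have P8: "y t \<le> t * ga t" if t: "t \<in> {0..x}" for t
  proof -
    have "0 * ga t - y 0 \<le> t * ga t - y t"
    proof (rule deriv_mono_sub[of 0 t "{0..x}"])
      show "0 \<le> t" "{0..t} \<subseteq> {0..x}" using t by auto
      fix u :: real assume "u \<in> {0..x}"
      then show "((\<lambda>u. u * ga t - y u) has_real_derivative 1 * ga t - ga u) (at u within {0..x})"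
        using DERIV_diff[OF DERIV_cmult_right[OF DERIV_ident] dy1] by simp
    next
      fix u :: real assume "u \<in> {0..t}"
      then show "0 \<le> 1 * ga t - ga u" using P7[of u t] t by auto
    qed
    then show ?thesis using y0 by simp
  qed
  define c where "c = ga 0"
  have P8b: "t * c \<le> y t" if t: "t \<in> {0..x}" for t
  proof -
    have "y 0 - 0 * c \<le> y t - t * c"
    proof (rule deriv_mono_sub[of 0 t "{0..x}"])
      show "0 \<le> t" "{0..t} \<subseteq> {0..x}" using t by auto
      fix u :: real assume "u \<in> {0..x}"
      then show "((\<lambda>u. y u - u * c) has_real_derivative ga u - 1 * c) (at u within {0..x})"
        using DERIV_diff[OF dy1 DERIV_cmult_right[OF DERIV_ident]] by simp
    next
      fix u :: real assume "u \<in> {0..t}"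
      then show "0 \<le> ga u - 1 * c" using P7[of 0 u] t unfolding c_def by auto
    qed
    then show ?thesis using y0 by simp
  qed
  have P9: "0 \<le> ga x"
  proof -
    have "0 \<le> x * ga x" using P4 P8[OF x0(1)] by linarith
    then show ?thesis using x by (simp add: zero_le_mult_iff)
  qed
  have Psi_mono: "\<Psi> a \<le> \<Psi> b" if ab: "0 \<le> a" "a \<le> b" "b \<le> 1" for a b
  proof (rule deriv_mono_sub[of a b "{0..1}"])
    show "a \<le> b" "{a..b} \<subseteq> {0..1}" using ab by auto
    fix u :: real assume "u \<in> {0..1}"
    then show "(\<Psi> has_real_derivative u * q u) (at u within {0..1})" using dPsi by blast
  next
    fix u :: real assume "u \<in> {a..b}"
    then show "0 \<le> u * q u" using qnn ab by auto
  qed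
  have Px0: "0 \<le> \<Psi> x" using Psi_mono[of 0 x] Psi0 x by simp
  have Px1: "\<Psi> x \<le> \<rho>" using Psi_mono[of x 1] Psi1 x by simp
  have rho0: "0 \<le> \<rho>" using Px0 Px1 by simp
  have P11: "- gb x \<le> ga x * \<rho>"
  proof -
    have dPsi2: "\<And>u. u \<in> {x..1} \<Longrightarrow> (\<Psi> has_real_derivative u * q u) (at u within {x..1})"
    proof -
      fix u :: real assume u: "u \<in> {x..1}"
      then have "u \<in> {0..1}" using x by auto
      from DERIV_subset[OF dPsi[OF this]] show "(\<Psi> has_real_derivative u * q u) (at u within {x..1})"
        using x by auto
    qed
    have "ga x * \<Psi> x - gb x \<le> ga x * \<Psi> 1 - gb 1"
    proof (rule deriv_mono_sub[of x 1 "{x..1}"])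
      show "x \<le> 1" "{x..1} \<subseteq> {x..1}" using x by auto
      fix u :: real assume "u \<in> {x..1}"
      then show "((\<lambda>u. ga x * \<Psi> u - gb u) has_real_derivative ga x * (u * q u) - q u * y u) (at u within {x..1})"
        using DERIV_diff[OF DERIV_cmult[OF dPsi2] dg2] by simp
    next
      fix u :: real assume u: "u \<in> {x..1}"
      have "y u \<le> u * ga x"
      proof -
        have "y u \<le> y x" using P6 u by blast
        also have "\<dots> \<le> x * ga x" using P8[OF x0(1)] .
        also have "\<dots> \<le> u * ga x" using u P9 by (intro mult_right_mono) auto
        finally show ?thesis .
      qed
      then have "q u * y u \<le> q u * (u * ga x)" using q2[OF u] by (intro mult_left_mono) auto
      then show "0 \<le> ga x * (u * q u) - q u * y u" by (simp add: algebra_simps)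
    qed
    then have "- gb x \<le> ga x * (\<rho> - \<Psi> x)" using g21 Psi1 by (simp add: algebra_simps)
    also have "\<dots> \<le> ga x * \<rho>" using P9 Px0 by (intro mult_left_mono) auto
    finally show ?thesis .
  qed
  have P12: "ga x * exp (- \<Psi> x) \<le> c"
  proof -
    have dPsi1: "\<And>u. u \<in> {0..x} \<Longrightarrow> (\<Psi> has_real_derivative u * q u) (at u within {0..x})"
    proof -
      fix u :: real assume u: "u \<in> {0..x}"
      then have "u \<in> {0..1}" using x by auto
      from DERIV_subset[OF dPsi[OF this]] show "(\<Psi> has_real_derivative u * q u) (at u within {0..x})"
        using x by auto
    qed
    have dE: "\<And>u. u \<in> {0..x} \<Longrightarrow> ((\<lambda>u. exp (- \<Psi> u)) has_real_derivative exp (- \<Psi> u) * (- (u * q u))) (at u within {0..x})"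
      using DERIV_exp[THEN DERIV_chain2, OF DERIV_minus[OF dPsi1]] by simp
    have "- (ga 0 * exp (- \<Psi> 0)) \<le> - (ga x * exp (- \<Psi> x))"
    proof (rule deriv_mono_sub[of 0 x "{0..x}"])
      show "0 \<le> x" "{0..x} \<subseteq> {0..x}" using x by auto
      fix u :: real assume u: "u \<in> {0..x}"
      show "((\<lambda>u. - (ga u * exp (- \<Psi> u))) has_real_derivative
             - (q u * y u * exp (- \<Psi> u) + exp (- \<Psi> u) * (- (u * q u)) * ga u)) (at u within {0..x})"
        using DERIV_minus[OF DERIV_mult[OF dg1[OF u] dE[OF u]]] by simp
    next
      fix u :: real assume u: "u \<in> {0..x}"
      have "y u \<le> u * ga u" using P8 u by blast
      then have "q u * y u \<le> q u * (u * ga u)" using q1[OF u] by (intro mult_left_mono) auto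
      then have "0 \<le> (q u * (u * ga u) - q u * y u) * exp (- \<Psi> u)" by simp
      then show "0 \<le> - (q u * y u * exp (- \<Psi> u) + exp (- \<Psi> u) * (- (u * q u)) * ga u)"
        by (simp add: algebra_simps)
    qed
    then show ?thesis using Psi0 unfolding c_def by simp
  qed
  have P12b: "ga x \<le> c * exp (\<Psi> x)"
  proof -
    have "ga x = ga x * exp (- \<Psi> x) * exp (\<Psi> x)" by (simp add: exp_minus)
    also have "\<dots> \<le> c * exp (\<Psi> x)" using P12 by (intro mult_right_mono) auto
    finally show ?thesis .
  qed
  have c0: "0 \<le> c"
  proof (rule ccontr)
    assume "\<not> 0 \<le> c"
    then have "c * exp (\<Psi> x) < 0" by (simp add: mult_neg_pos)
    then show False using P12b P9 by linarith
  qed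
  have P13: "1 \<le> c * (exp \<rho> * (1 + \<rho>))"
  proof -
    have "1 = ga x - gb x" using jump by simp
    also have "\<dots> \<le> ga x * (1 + \<rho>)" using P11 by (simp add: algebra_simps)
    also have "\<dots> \<le> c * exp (\<Psi> x) * (1 + \<rho>)" using P12b rho0 by (intro mult_right_mono) auto
    also have "\<dots> \<le> c * exp \<rho> * (1 + \<rho>)" using Px1 c0 rho0 by (intro mult_right_mono mult_left_mono) auto
    finally show ?thesis by (simp add: mult.assoc)
  qed
  have cb: "exp (- \<rho>) / (1 + \<rho>) \<le> c"
  proof -
    have pos: "0 < exp \<rho> * (1 + \<rho>)" using rho0 by simp
    have "exp (- \<rho>) / (1 + \<rho>) = 1 / (exp \<rho> * (1 + \<rho>))" by (simp add: exp_minus field_simps)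
    also have "\<dots> \<le> c" using P13 pos by (simp add: divide_le_eq mult.commute)
    finally show ?thesis .
  qed
  show ?thesis
  proof
    fix s assume s: "s \<in> {0<..x}"
    then have s0: "s \<in> {0..x}" "0 < s" by auto
    have "c * x \<le> c * 1" using c0 x by (intro mult_left_mono) auto
    then have "c \<le> c / x" using x by (simp add: le_divide_eq)
    also have "c / x = s * c / (s * x)" using s0 x by simp
    also have "\<dots> \<le> y s / (s * x)" using P8b[OF s0(1)] s0 x by (intro divide_right_mono) auto
    finally show "exp (- \<rho>) / (1 + \<rho>) \<le> y s / (s * x)" using cb by linarith
  qed
qed


lemma const_on:
  fixes f :: "real \<Rightarrow> real"
  assumes "a \<le> b" "\<And>u. u \<in> {a..b} \<Longrightarrow> (f has_real_derivative 0) (at u within {a..b})"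
  shows "f a = f b"
proof -
  obtain c where "\<forall>u\<in>{a..b}. f u = c"
    using has_field_derivative_zero_constant[of "{a..b}" f] assms by auto
  then show ?thesis using assms(1) by auto
qed

lemma wronsk_const:
  fixes y g z h q :: "real \<Rightarrow> real"
  assumes ab: "a \<le> b" and sub1: "{a..b} \<subseteq> S1" and sub2: "{a..b} \<subseteq> S2"
    and dy: "\<And>t. t \<in> S1 \<Longrightarrow> (y has_real_derivative g t) (at t within S1) \<and>
                     (g has_real_derivative q t * y t) (at t within S1)"
    and dz: "\<And>t. t \<in> S2 \<Longrightarrow> (z has_real_derivative h t) (at t within S2) \<and>
                     (h has_real_derivative q t * z t) (at t within S2)"
  shows "g a * z a - y a * h a = g b * z b - y b * h b"
proof (rule const_on[OF ab])
  fix u assume u: "u \<in> {a..b}"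
  have u1: "u \<in> S1" and u2: "u \<in> S2" using u sub1 sub2 by auto
  have y': "(y has_real_derivative g u) (at u within {a..b})"
    using DERIV_subset[OF conjunct1[OF dy[OF u1]] sub1] .
  have g': "(g has_real_derivative q u * y u) (at u within {a..b})"
    using DERIV_subset[OF conjunct2[OF dy[OF u1]] sub1] .
  have z': "(z has_real_derivative h u) (at u within {a..b})"
    using DERIV_subset[OF conjunct1[OF dz[OF u2]] sub2] .
  have h': "(h has_real_derivative q u * z u) (at u within {a..b})"
    using DERIV_subset[OF conjunct2[OF dz[OF u2]] sub2] .
  have D: "((\<lambda>u. g u * z u - y u * h u) has_real_derivative
        (q u * y u * z u + h u * g u) - (g u * h u + q u * z u * y u)) (at u within {a..b})"
    using DERIV_diff[OF DERIV_mult[OF g' z'] DERIV_mult[OF y' h']] .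
  have "(q u * y u * z u + h u * g u) - (g u * h u + q u * z u * y u) = 0" by (simp add: algebra_simps)
  then show "((\<lambda>u. g u * z u - y u * h u) has_real_derivative 0) (at u within {a..b})" using D by simp
qed

lemma sym_core:
  fixes y z ga gb ha hb q :: "real \<Rightarrow> real" and s x :: real
  assumes sx: "0 < s" "s < x" "x \<le> 1"
    and y0: "y 0 = 0"
    and d1: "\<And>t. t \<in> {0..x} \<Longrightarrow> (y has_real_derivative ga t) (at t within {0..x}) \<and>
                     (ga has_real_derivative q t * y t) (at t within {0..x})"
    and d2: "\<And>t. t \<in> {x..1} \<Longrightarrow> (y has_real_derivative gb t) (at t within {x..1}) \<and>
                     (gb has_real_derivative q t * y t) (at t within {x..1})"
    and g21: "gb 1 = 0" and jump: "ga x - gb x = 1"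
    and z0: "z 0 = 0"
    and e1: "\<And>t. t \<in> {0..s} \<Longrightarrow> (z has_real_derivative ha t) (at t within {0..s}) \<and>
                     (ha has_real_derivative q t * z t) (at t within {0..s})"
    and e2: "\<And>t. t \<in> {s..1} \<Longrightarrow> (z has_real_derivative hb t) (at t within {s..1}) \<and>
                     (hb has_real_derivative q t * z t) (at t within {s..1})"
    and h21: "hb 1 = 0" and jumpz: "ha s - hb s = 1"
  shows "y s = z x"
proof -
  have W1: "ga 0 * z 0 - y 0 * ha 0 = ga s * z s - y s * ha s"
    by (rule wronsk_const[OF _ _ _ d1 e1]) (use sx in auto)
  have W2: "ga s * z s - y s * hb s = ga x * z x - y x * hb x"
    by (rule wronsk_const[OF _ _ _ d1 e2]) (use sx in auto)
  have W3: "gb x * z x - y x * hb x = gb 1 * z 1 - y 1 * hb 1"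
    by (rule wronsk_const[OF _ _ _ d2 e2]) (use sx in auto)
  have a: "ga s * z s = y s * ha s" using W1 y0 z0 by simp
  have "y s = y s * (ha s - hb s)" using jumpz by simp
  also have "\<dots> = ga s * z s - y s * hb s" using a by (simp add: algebra_simps)
  also have "\<dots> = ga x * z x - y x * hb x" using W2 .
  also have "\<dots> = (ga x - gb x) * z x + (gb x * z x - y x * hb x)" by (simp add: algebra_simps)
  also have "\<dots> = z x" using W3 jump g21 h21 by simp
  finally show ?thesis .
qed

lemma part_b:
  shows "\<forall>(\<eta>::real \<Rightarrow> 'b::euclidean_space) \<eta>s \<eta>ss (G::real \<Rightarrow> real \<Rightarrow> real).
            (\<forall>s\<in>{0..1}. (\<eta> has_vector_derivative \<eta>s s) (at s within {0..1})) \<longrightarrow>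
            (\<forall>s\<in>{0..1}. (\<eta>s has_vector_derivative \<eta>ss s) (at s within {0..1})) \<longrightarrow>
            smooth_on_set {0..1} \<eta>ss \<longrightarrow>
            cont_green (\<lambda>s. (norm (\<eta>ss s))\<^sup>2) G \<longrightarrow>
            (let \<rho> = integral {0..1} (\<lambda>s. s * (norm (\<eta>ss s))\<^sup>2) in
             \<forall>s\<in>{0<..1}. \<forall>x\<in>{0<..1}. G s x / (s * x) \<ge> exp (- \<rho>) / (1 + \<rho>))"
proof (intro allI impI)
  fix \<eta> :: "real \<Rightarrow> 'b" and \<eta>s \<eta>ss :: "real \<Rightarrow> 'b" and G :: "real \<Rightarrow> real \<Rightarrow> real"
  assume sm: "smooth_on_set {0..1} \<eta>ss" and cg: "cont_green (\<lambda>s. (norm (\<eta>ss s))\<^sup>2) G"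
  define q where "q s = (norm (\<eta>ss s))\<^sup>2" for s
  define \<rho> where "\<rho> = integral {0..1} (\<lambda>s. s * (norm (\<eta>ss s))\<^sup>2)"
  define \<Psi> where "\<Psi> u = integral {0..u} (\<lambda>s. s * q s)" for u
  obtain D where D0: "D 0 = \<eta>ss" and dd: "\<forall>k. \<forall>s\<in>{0..1}. (D k has_vector_derivative D (Suc k) s) (at s within {0..1})"
    using sm unfolding smooth_on_set_def by blast
  have cont_ss: "continuous_on {0..1} \<eta>ss"
    unfolding continuous_on_eq_continuous_within
  proof
    fix s :: real assume "s \<in> {0..1}"
    then have "(D 0 has_vector_derivative D (Suc 0) s) (at s within {0..1})" using dd by blast
    then show "continuous (at s within {0..1}) \<eta>ss" using D0 has_vector_derivative_continuous by metis
  qed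
  have cq: "continuous_on {0..1} (\<lambda>s. s * q s)"
    unfolding q_def by (intro continuous_intros cont_ss)
  have dPsi: "\<And>t. t \<in> {0..1} \<Longrightarrow> (\<Psi> has_real_derivative t * q t) (at t within {0..1})"
    unfolding \<Psi>_def has_real_derivative_iff_has_vector_derivative
    using integral_has_vector_derivative[OF cq] by blast
  have Psi0: "\<Psi> 0 = 0" unfolding \<Psi>_def by simp
  have Psi1: "\<Psi> 1 = \<rho>" unfolding \<Psi>_def \<rho>_def q_def by simp
  have qnn: "\<And>t. t \<in> {0..1} \<Longrightarrow> 0 \<le> q t" unfolding q_def by simp
  have cg': "\<forall>x\<in>{0<..1}.
      continuous_on {0..1} (\<lambda>s. G s x) \<and> G 0 x = 0 \<and>
      (\<exists>g1 g2.
         (\<forall>s\<in>{0..x}. ((\<lambda>t. G t x) has_real_derivative g1 s) (at s within {0..x}) \<and>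
                      (g1 has_real_derivative q s * G s x) (at s within {0..x})) \<and>
         (\<forall>s\<in>{x..1}. ((\<lambda>t. G t x) has_real_derivative g2 s) (at s within {x..1}) \<and>
                      (g2 has_real_derivative q s * G s x) (at s within {x..1})) \<and>
         g2 1 = 0 \<and> g1 x - g2 x = 1)"
    using cg unfolding cont_green_def q_def by simp
  have diag: "exp (- \<rho>) / (1 + \<rho>) \<le> G s x / (s * x)" if sx: "0 < s" "s \<le> x" "x \<le> 1" for s x
  proof -
    have xi: "x \<in> {0<..1}" using sx by auto
    obtain g1 g2 where
      d1: "\<forall>s\<in>{0..x}. ((\<lambda>t. G t x) has_real_derivative g1 s) (at s within {0..x}) \<and>
                      (g1 has_real_derivative q s * G s x) (at s within {0..x})" and
      d2: "\<forall>s\<in>{x..1}. ((\<lambda>t. G t x) has_real_derivative g2 s) (at s within {x..1}) \<and>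
                      (g2 has_real_derivative q s * G s x) (at s within {x..1})" and
      g21: "g2 1 = 0" and jump: "g1 x - g2 x = 1"
      using cg'[rule_format, OF xi] by blast
    have yc: "continuous_on {0..1} (\<lambda>t. G t x)" and y0: "G 0 x = 0" using cg'[rule_format, OF xi] by auto
    have "\<forall>s\<in>{0<..x}. exp (- \<rho>) / (1 + \<rho>) \<le> G s x / (s * x)"
      by (rule diag_core[where y="\<lambda>t. G t x" and ga=g1 and gb=g2 and q=q and \<Psi>=\<Psi>])
         (use sx yc y0 d1 d2 g21 jump qnn dPsi Psi0 Psi1 in auto)
    then show ?thesis using sx by auto
  qed
  show "let \<rho> = integral {0..1} (\<lambda>s. s * (norm (\<eta>ss s))\<^sup>2) in
       \<forall>s\<in>{0<..1}. \<forall>x\<in>{0<..1}. exp (- \<rho>) / (1 + \<rho>) \<le> G s x / (s * x)"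
    unfolding Let_def \<rho>_def[symmetric]
  proof (intro ballI)
    fix s x :: real assume s: "s \<in> {0<..1}" and x: "x \<in> {0<..1}"
    show "exp (- \<rho>) / (1 + \<rho>) \<le> G s x / (s * x)"
    proof (cases "s \<le> x")
      case True
      then show ?thesis using diag s x by auto
    next
      case False
      obtain g1 g2 where
        d1: "\<forall>t\<in>{0..s}. ((\<lambda>t. G t s) has_real_derivative g1 t) (at t within {0..s}) \<and>
                        (g1 has_real_derivative q t * G t s) (at t within {0..s})" and
        d2: "\<forall>t\<in>{s..1}. ((\<lambda>t. G t s) has_real_derivative g2 t) (at t within {s..1}) \<and>
                        (g2 has_real_derivative q t * G t s) (at t within {s..1})" and
        g21: "g2 1 = 0" and jump: "g1 s - g2 s = 1"
        using cg'[rule_format, OF s] by blast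
      obtain h1 h2 where
        e1: "\<forall>t\<in>{0..x}. ((\<lambda>t. G t x) has_real_derivative h1 t) (at t within {0..x}) \<and>
                        (h1 has_real_derivative q t * G t x) (at t within {0..x})" and
        e2: "\<forall>t\<in>{x..1}. ((\<lambda>t. G t x) has_real_derivative h2 t) (at t within {x..1}) \<and>
                        (h2 has_real_derivative q t * G t x) (at t within {x..1})" and
        h21: "h2 1 = 0" and jumpz: "h1 x - h2 x = 1"
        using cg'[rule_format, OF x] by blast
      have y0: "G 0 s = 0" and z0: "G 0 x = 0" using cg'[rule_format, OF s] cg'[rule_format, OF x] by auto
      have eq: "G x s = G s x"
        by (rule sym_core[where y="\<lambda>t. G t s" and z="\<lambda>t. G t x" and ga=g1 and gb=g2 and ha=h1 and hb=h2 and q=q])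
           (use False s x y0 z0 d1 d2 e1 e2 g21 h21 jump jumpz in auto)
      have "exp (- \<rho>) / (1 + \<rho>) \<le> G x s / (x * s)" using diag[of x s] False s x by auto
      then show ?thesis using eq by (simp add: mult.commute)
    qed
  qed
qed


theorem proposition3p4:
  shows "(\<forall>(n::nat) (\<eta>::nat \<Rightarrow> 'a::euclidean_space) (\<upsilon>::real).
            \<eta> (n + 1) = 0 \<longrightarrow>
            (\<forall>k\<in>{1..n}. norm (grad_plus n \<eta> k) = 1) \<longrightarrow>
            0 < \<upsilon> \<longrightarrow> \<upsilon> \<le> 2 * sqrt (real n) / 5 \<longrightarrow>
            (\<forall>k\<in>{1..n-1}. real k powr (3/2) / real n powr (3/2)
                 * (norm (grad_plus n (grad_plus n \<eta>) k))\<^sup>2 \<le> \<upsilon>) \<longrightarrow>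
            (\<forall>j\<in>{1..n}. \<forall>k\<in>{1..n}.
                 (real n)\<^sup>2 * disc_green (alpha_seq n \<eta>) n k j / (real j * real k) \<ge> exp (- 2 * \<upsilon>)))
       \<and>
       (\<forall>(\<eta>::real \<Rightarrow> 'b::euclidean_space) \<eta>s \<eta>ss (G::real \<Rightarrow> real \<Rightarrow> real).
            (\<forall>s\<in>{0..1}. (\<eta> has_vector_derivative \<eta>s s) (at s within {0..1})) \<longrightarrow>
            (\<forall>s\<in>{0..1}. (\<eta>s has_vector_derivative \<eta>ss s) (at s within {0..1})) \<longrightarrow>
            smooth_on_set {0..1} \<eta>ss \<longrightarrow>
            cont_green (\<lambda>s. (norm (\<eta>ss s))\<^sup>2) G \<longrightarrow>
            (let \<rho> = integral {0..1} (\<lambda>s. s * (norm (\<eta>ss s))\<^sup>2) in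
             \<forall>s\<in>{0<..1}. \<forall>x\<in>{0<..1}. G s x / (s * x) \<ge> exp (- \<rho>) / (1 + \<rho>)))"
  by (rule conjI[OF part_a part_b])

end
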